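(* In the setting described in the context, let $\mathfrak h$ be the single-electron space spanned by $c^\dagger_{r,\uparrow}\Phi_{\rm vac}$, $r\in\Lambda$, and let $\mathfrak h_{\rm L}$ (resp. $\mathfrak h_{\rm U}$) be the subspace spanned by $a^\dagger_{x,\uparrow}\Phi_{\rm vac}$, $x\in\mathcal{E}$ (resp. $b^\dagger_{u,\uparrow}\Phi_{\rm vac}$, $u\in\mathcal{I}$), so that $\mathfrak h=\mathfrak h_{\rm L}\oplus\mathfrak h_{\rm U}$. Then $H$ can be diagonalized within $\mathfrak h_{\rm L}$ and within $\mathfrak h_{\rm U}$ respectively (each is invariant under $H$). Every eigenvalue $\epsilon$ of $H$ in $\mathfrak h_{\rm L}$ satisfies $$-s\{1+(m+\ell_{\rm L})\nu^2\}\le\epsilon\le\min\{0,-s\{1+(m-\ell_{\rm L})\nu^2\}\},$$ and every eigenvalue $\epsilon$ of $H$ in $\mathfrak h_{\rm U}$ satisfies $$\max\{0,t\{1+(n-\ell_{\rm U})\nu^2\}\}\le\epsilon\le t\{1+(n+\ell_{\rm U})\nu^2\}.$$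
   Context: Lattice: fix integers $n,m\ge2$. A basic cell is a set of $n+1$ sites $\{u,x_1,\dots,x_n\}$ ($u$ internal, $x_i$ external). $\Lambda$ is formed from $M$ copies of the basic cell by identifying external sites from $m$ distinct cells as a single site (each external site lies in exactly $m$ cells); internal sites are not identified; $\Lambda$ is connected. $\mathcal{I},\mathcal{E}$ are the sets of internal and external sites; $C_u$ is the cell containing $u\in\mathcal{I}$; $\Lambda_x$ is the union of the $m$ cells containing $x\in\mathcal{E}$. Fermion operators $c_{r,\sigma}$ satisfy canonical anticommutation relations on the Fock space with vacuum $\Phi_{\rm vac}$; $n_{r,\sigma}=c^\dagger_{r,\sigma}c_{r,\sigma}$. Parameters $t,s,U,\nu>0$. $a_{x,\sigma}=c_{x,\sigma}-\nu\sum_{u\in\Lambda_x\cap\mathcal{I}}c_{u,\sigma}$ ($x\in\mathcal{E}$), $b_{u,\sigma}=c_{u,\sigma}+\nu\sum_{x\in C_u\setminus\{u\}}c_{x,\sigma}$ ($u\in\mathcal{I}$). $H=-s\sum_{x\in\mathcal{E},\sigma}a^\dagger_{x,\sigma}a_{x,\sigma}+t\sum_{u\in\mathcal{I},\sigma}b^\dagger_{u,\sigma}b_{u,\sigma}+U\sum_{r\in\Lambda}n_{r,\uparrow}n_{r,\downarrow}$. For $x,y\in\mathcal{E}$, $\ell_{x,y}=|\Lambda_x\cap\Lambda_y\cap\mathcal{I}|$ (number of cells containing both); for $u,v\in\mathcal{I}$, $\ell_{u,v}=|C_u\cap C_v\cap\mathcal{E}|$. $\ell_{\rm L}=\sum_{y\in\mathcal{E},y\ne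 x}\ell_{x,y}$ for $x\in\mathcal{E}$ and $\ell_{\rm U}=\sum_{v\in\mathcal{I},v\ne u}\ell_{u,v}$ for $u\in\mathcal{I}$ (these do not depend on the choice of $x$, resp. $u$). *)

theory Defs
  imports "HOL-Analysis.Analysis"
begin

text \<open>Sites are the elements of a finite type 'n (so Lambda = UNIV).
  I is the set of internal sites, E = - I the external sites, and for u in I,
  C u is the cell containing u (u together with its n external sites).\<close>

definition site_adj :: "'n set \<Rightarrow> ('n \<Rightarrow> 'n set) \<Rightarrow> 'n \<Rightarrow> 'n \<Rightarrow> bool" where
  "site_adj I C r r' \<longleftrightarrow> (r \<in> I \<and> r' \<in> C r) \<or> (r' \<in> I \<and> r \<in> C r')"

definition lattice :: "nat \<Rightarrow> nat \<Rightarrow> 'n::finite set \<Rightarrow> ('n \<Rightarrow> 'n set) \<Rightarrow> bool" where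
  "lattice n m I C \<longleftrightarrow>
     I \<noteq> {} \<and>
     (\<forall>u\<in>I. u \<in> C u \<and> C u - {u} \<subseteq> - I \<and> card (C u - {u}) = n) \<and>
     (\<forall>x\<in>- I. card {u\<in>I. x \<in> C u} = m) \<and>
     (\<forall>r r'. (site_adj I C)\<^sup>*\<^sup>* r r')"

text \<open>Coefficient vectors of a_x^dagger Phi_vac and b_u^dagger Phi_vac in the
  single-electron (spin up) space, identified with real^'n via c_{r,up}^dagger Phi_vac.\<close>

definition avec :: "real \<Rightarrow> 'n set \<Rightarrow> ('n \<Rightarrow> 'n set) \<Rightarrow> 'n \<Rightarrow> real ^ 'n::finite" where
  "avec \<nu> I C x = (\<chi> r. if r = x then 1 else if r \<in> I \<and> x \<in> C r then - \<nu> else 0)"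

definition bvec :: "real \<Rightarrow> ('n \<Rightarrow> 'n set) \<Rightarrow> 'n \<Rightarrow> real ^ 'n::finite" where
  "bvec \<nu> C u = (\<chi> r. if r = u then 1 else if r \<in> C u - {u} then \<nu> else 0)"

text \<open>Action of H on the single-electron space (the Hubbard term vanishes there):
  H = -s sum_x a_x^dagger a_x + t sum_u b_u^dagger b_u.\<close>

definition H1 :: "real \<Rightarrow> real \<Rightarrow> real \<Rightarrow> 'n set \<Rightarrow> ('n \<Rightarrow> 'n set) \<Rightarrow> real ^ 'n::finite \<Rightarrow> real ^ 'n" where
  "H1 s t \<nu> I C v =
     (- s) *\<^sub>R (\<Sum>x\<in>- I. (avec \<nu> I C x \<bullet> v) *\<^sub>R avec \<nu> I C x)
     + t *\<^sub>R (\<Sum>u\<in>I. (bvec \<nu> C u \<bullet> v) *\<^sub>R bvec \<nu> C u)"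

definition ellE :: "'n set \<Rightarrow> ('n \<Rightarrow> 'n set) \<Rightarrow> 'n \<Rightarrow> 'n \<Rightarrow> nat" where
  "ellE I C x y = card {u\<in>I. x \<in> C u \<and> y \<in> C u}"

definition ellI :: "'n set \<Rightarrow> ('n \<Rightarrow> 'n set) \<Rightarrow> 'n \<Rightarrow> 'n \<Rightarrow> nat" where
  "ellI I C u v = card (C u \<inter> C v \<inter> - I)"

definition ellL :: "'n::finite set \<Rightarrow> ('n \<Rightarrow> 'n set) \<Rightarrow> 'n \<Rightarrow> nat" where
  "ellL I C x = (\<Sum>y\<in>- I - {x}. ellE I C x y)"

definition ellU :: "'n::finite set \<Rightarrow> ('n \<Rightarrow> 'n set) \<Rightarrow> 'n \<Rightarrow> nat" where
  "ellU I C u = (\<Sum>v\<in>I - {u}. ellI I C u v)"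

end

theory Submission
  imports Defs
begin


lemma quad_nonneg_zero:
  fixes c q :: real
  assumes "\<And>t. 0 \<le> 2*t*c + t^2*q" "q \<ge> 0" "c \<ge> 0"
  shows "c = 0"
proof (rule ccontr)
  assume "c \<noteq> 0" hence cp: "c > 0" using assms by auto
  define t where "t = - c/(q+1)"
  have "0 \<le> 2*t*c + t^2*q" by (rule assms(1))
  also have "2*t*c + t^2*q = c^2*(-q-2)/(q+1)^2"
  proof -
    have "q+1 > 0" using assms(2) by simp
    thus ?thesis unfolding t_def by (simp add: divide_simps power2_eq_square) (simp add: algebra_simps)
  qed
  also have "\<dots> < 0" using cp assms(2)
    by (intro divide_neg_pos mult_pos_neg) auto
  finally show False by simp
qed

lemma eigen_exists:
  fixes f :: "'a::euclidean_space \<Rightarrow> 'a"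
  assumes lin: "linear f" and sa: "\<And>x y. f x \<bullet> y = x \<bullet> f y"
    and sub: "subspace S" and inv: "f ` S \<subseteq> S" and ne: "S \<noteq> {0}"
  shows "\<exists>x\<in>S. x \<noteq> 0 \<and> (\<exists>e. f x = e *\<^sub>R x)"
proof -
  obtain z where z: "z \<in> S" "z \<noteq> 0" using ne sub subspace_0 by blast
  define K where "K = S \<inter> sphere 0 1"
  have "compact K" unfolding K_def
    by (intro closed_Int_compact closed_subspace sub compact_sphere)
  moreover have "K \<noteq> {}"
  proof -
    have "(1/norm z) *\<^sub>R z \<in> K" unfolding K_def using z sub
      by (auto simp: subspace_scale)
    thus ?thesis by blast
  qed
  moreover have "continuous_on K (\<lambda>x. x \<bullet> f x)"
    using lin by (intro continuous_intros linear_continuous_on) (auto simp: linear_conv_bounded_linear)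
  ultimately obtain x0 where x0: "x0 \<in> K" and mx: "\<And>y. y \<in> K \<Longrightarrow> y \<bullet> f y \<le> x0 \<bullet> f x0"
    using continuous_attains_sup by metis
  define l where "l = x0 \<bullet> f x0"
  have x0S: "x0 \<in> S" and nx0: "norm x0 = 1" using x0 unfolding K_def by auto
  have Q: "y \<bullet> f y \<le> l * (y \<bullet> y)" if "y \<in> S" for y
  proof (cases "y = 0")
    case True thus ?thesis using lin by (simp add: linear_0)
  next
    case False
    define w where "w = (1/norm y) *\<^sub>R y"
    have "w \<in> K" unfolding K_def w_def using that False sub by (auto simp: subspace_scale)
    hence "w \<bullet> f w \<le> l" using mx l_def by blast
    moreover have "w \<bullet> f w = (y \<bullet> f y) / (norm y)^2" unfolding w_def
      using lin by (simp add: linear_scale power2_eq_square)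
    moreover have "y \<bullet> y = (norm y)^2" by (simp add: power2_norm_eq_inner)
    ultimately show ?thesis using False by (simp add: divide_le_eq)
  qed
  define y where "y = l *\<^sub>R x0 - f x0"
  have yS: "y \<in> S" unfolding y_def using x0S inv sub
    by (meson image_subset_iff subspace_diff subspace_scale)
  have key: "0 \<le> 2*t*(y \<bullet> y) + t^2*(l*(y \<bullet> y) - y \<bullet> f y)" for t
  proof -
    have "x0 + t *\<^sub>R y \<in> S" using x0S yS sub by (simp add: subspace_add subspace_scale)
    hence "(x0 + t *\<^sub>R y) \<bullet> f (x0 + t *\<^sub>R y) \<le> l * ((x0 + t *\<^sub>R y) \<bullet> (x0 + t *\<^sub>R y))" by (rule Q)
    moreover have "f (x0 + t *\<^sub>R y) = f x0 + t *\<^sub>R f y" using lin by (simp add: linear_add linear_scale)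
    moreover have "x0 \<bullet> x0 = 1" using nx0 by (simp add: norm_eq_1)
    moreover have "y \<bullet> f x0 = f y \<bullet> x0" using sa[of y x0] by (simp add: inner_commute)
    moreover have "y \<bullet> y = l * (y \<bullet> x0) - y \<bullet> f x0" unfolding y_def[symmetric]
      by (metis inner_diff_right inner_scaleR_right y_def)
    moreover have "(x0 + t *\<^sub>R y) \<bullet> (f x0 + t *\<^sub>R f y) = l + 2*t*(y \<bullet> f x0) + t^2 * (y \<bullet> f y)"
      using sa[of y x0] unfolding l_def by (simp add: inner_add_left inner_add_right algebra_simps power2_eq_square inner_commute)
    moreover have "(x0 + t *\<^sub>R y) \<bullet> (x0 + t *\<^sub>R y) = 1 + 2*t*(y \<bullet> x0) + t^2 * (y \<bullet> y)"
      using \<open>x0 \<bullet> x0 = 1\<close> by (simp add: inner_add_left inner_add_right algebra_simps power2_eq_square inner_commute)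
    ultimately have h: "l + 2*t*(y \<bullet> f x0) + t^2 * (y \<bullet> f y) \<le> l * (1 + 2*t*(y \<bullet> x0) + t^2 * (y \<bullet> y))"
      by simp
    have eq: "y \<bullet> y = l * (y \<bullet> x0) - y \<bullet> f x0" by fact
    show ?thesis using h unfolding eq by (simp add: algebra_simps)
  qed
  have "y \<bullet> y = 0"
    by (rule quad_nonneg_zero[OF key]) (use Q[OF yS] in auto)
  hence "f x0 = l *\<^sub>R x0" unfolding y_def by simp
  moreover have "x0 \<noteq> 0" using nx0 by auto
  ultimately show ?thesis using x0S by blast
qed

lemma eigen_basis_aux:
  fixes f :: "'a::euclidean_space \<Rightarrow> 'a"
  assumes lin: "linear f" and sa: "\<And>x y. f x \<bullet> y = x \<bullet> f y"
    and sub: "subspace S" and inv: "f ` S \<subseteq> S"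
  shows "B \<subseteq> S \<Longrightarrow> pairwise orthogonal B \<Longrightarrow> 0 \<notin> B \<Longrightarrow> (\<forall>b\<in>B. \<exists>e. f b = e *\<^sub>R b)
     \<Longrightarrow> dim S - card B = k
     \<Longrightarrow> \<exists>B'. B' \<subseteq> S \<and> independent B' \<and> span B' = S \<and> (\<forall>b\<in>B'. \<exists>e. f b = e *\<^sub>R b)"
proof (induction k arbitrary: B)
  case 0
  have ind: "independent B" using pairwise_orthogonal_independent[OF 0(2) 0(3)] .
  have "S \<subseteq> span B" using card_ge_dim_independent[OF 0(1) ind] 0(5) by simp
  moreover have "span B \<subseteq> S" using 0(1) sub by (simp add: span_minimal)
  ultimately have "span B = S" by blast
  thus ?case using 0(1,4) ind by (intro exI[of _ B]) simp
next
  case (Suc k)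
  have ind: "independent B" using pairwise_orthogonal_independent[OF Suc(3) Suc(4)] .
  show ?case
  proof (cases "span B = S")
    case True thus ?thesis using Suc(2,5) ind by (intro exI[of _ B]) simp
  next
    case False
    have "span B \<subseteq> S" using Suc(2) sub by (simp add: span_minimal)
    moreover have spanS: "span S = S" using sub by (simp add: span_eq_iff)
    ultimately have "span B \<subset> span S" using False by (metis psubsetI)
    then obtain x where x: "x \<noteq> 0" "x \<in> span S" "\<And>y. y \<in> span B \<Longrightarrow> orthogonal x y"
      by (rule orthogonal_to_subspace_exists_gen) blast
    define S' where "S' = {y\<in>S. \<forall>b\<in>B. orthogonal y b}"
    have sub': "subspace S'" unfolding S'_def subspace_def orthogonal_def
      using sub by (simp add: subspace_0 subspace_add subspace_scale inner_add_left)
    have inv': "f ` S' \<subseteq> S'"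
    proof
      fix z assume "z \<in> f ` S'"
      then obtain y where y: "y \<in> S'" "z = f y" by blast
      have yS: "y \<in> S" using y(1) unfolding S'_def by blast
      have "f y \<in> S" using yS inv by blast
      moreover have "orthogonal (f y) b" if bB: "b \<in> B" for b
      proof -
        obtain e where "f b = e *\<^sub>R b" using bspec[OF Suc(5) bB] by (elim exE)
        hence "f y \<bullet> b = e * (y \<bullet> b)" using sa[of y b] by simp
        moreover have "y \<bullet> b = 0" using y(1) bB unfolding S'_def orthogonal_def by blast
        ultimately show ?thesis unfolding orthogonal_def by simp
      qed
      ultimately show "z \<in> S'" unfolding y(2) S'_def by blast
    qed
    have "x \<in> S" using x(2) unfolding spanS .
    moreover have "\<forall>b\<in>B. orthogonal x b" using x(3) span_superset by blast
    ultimately have "x \<in> S'" unfolding S'_def by blast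
    hence S'ne: "S' \<noteq> {0}" using x(1) by blast
    have "\<exists>x\<in>S'. x \<noteq> 0 \<and> (\<exists>e. f x = e *\<^sub>R x)" by (rule eigen_exists[OF lin sa sub' inv' S'ne])
    then obtain x0 where x0S': "x0 \<in> S'" and x0r: "x0 \<noteq> 0 \<and> (\<exists>e. f x0 = e *\<^sub>R x0)" ..
    note x0 = x0S' conjunct1[OF x0r] conjunct2[OF x0r]
    have x0B: "x0 \<notin> B"
    proof
      assume "x0 \<in> B"
      hence "orthogonal x0 x0" using x0(1) unfolding S'_def by blast
      thus False using x0(2) by (simp add: orthogonal_def)
    qed
    have fin: "finite B" using ind by (simp add: finiteI_independent)
    have "card B \<le> dim S" using independent_card_le_dim[OF Suc(2) ind] .
    hence dk: "dim S - card (insert x0 B) = k" using Suc(6) x0B fin by simp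
    have "\<forall>b\<in>B. orthogonal x0 b" using x0(1) unfolding S'_def by blast
    hence po: "pairwise orthogonal (insert x0 B)"
      using Suc(3) unfolding pairwise_insert by (simp add: orthogonal_commute)
    have x0S: "x0 \<in> S" using x0(1) unfolding S'_def by blast
    have h1: "insert x0 B \<subseteq> S" using x0S Suc(2) by blast
    have h2: "0 \<notin> insert x0 B" using Suc(4) x0(2) by simp
    have h3: "\<forall>b\<in>insert x0 B. \<exists>e. f b = e *\<^sub>R b" using Suc(5) x0(3) by simp
    show ?thesis by (rule Suc.IH[OF h1 po h2 h3 dk])
  qed
qed

lemma eigen_basis:
  fixes f :: "'a::euclidean_space \<Rightarrow> 'a"
  assumes lin: "linear f" and sa: "\<And>x y. f x \<bullet> y = x \<bullet> f y"
    and sub: "subspace S" and inv: "f ` S \<subseteq> S"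
  shows "\<exists>B'. B' \<subseteq> S \<and> independent B' \<and> span B' = S \<and> (\<forall>b\<in>B'. \<exists>e. f b = e *\<^sub>R b)"
  by (rule eigen_basis_aux[OF assms, of "{}"]) auto

lemma sum_UNIV_if: "(\<Sum>r\<in>(UNIV::'a::finite set). if r \<in> B then g r else 0) = sum g B"
  using sum.inter_restrict[of "UNIV::'a set" g B, symmetric] by simp

lemma gersh:
  fixes e c \<alpha> \<beta> w R K :: real
  assumes "e * w = c * (\<alpha> * w + \<beta> * R)" "\<bar>R\<bar> \<le> K * \<bar>w\<bar>" "w \<noteq> 0" "\<beta> \<ge> 0"
  shows "\<bar>e - c * \<alpha>\<bar> \<le> \<bar>c\<bar> * \<beta> * K"
proof -
  have "(e - c * \<alpha>) * w = c * \<beta> * R" using assms(1) by (simp add: algebra_simps)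
  hence "\<bar>e - c * \<alpha>\<bar> * \<bar>w\<bar> = \<bar>c\<bar> * \<beta> * \<bar>R\<bar>" using assms(4) by (metis abs_mult abs_of_nonneg)
  also have "\<dots> \<le> \<bar>c\<bar> * \<beta> * (K * \<bar>w\<bar>)" using assms(2,4) by (simp add: mult_left_mono)
  finally have "\<bar>e - c * \<alpha>\<bar> * \<bar>w\<bar> \<le> (\<bar>c\<bar> * \<beta> * K) * \<bar>w\<bar>" by (simp add: algebra_simps)
  thus ?thesis using assms(3) by simp
qed

lemma double_sum_bound:
  fixes w :: "'b \<Rightarrow> real"
  assumes "finite A" "\<And>i. i \<in> A \<Longrightarrow> finite (B i)" "\<And>i j. i \<in> A \<Longrightarrow> j \<in> B i \<Longrightarrow> \<bar>w j\<bar> \<le> M"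
  shows "\<bar>\<Sum>i\<in>A. \<Sum>j\<in>B i. w j\<bar> \<le> real (\<Sum>i\<in>A. card (B i)) * M"
proof -
  have "\<bar>\<Sum>i\<in>A. \<Sum>j\<in>B i. w j\<bar> \<le> (\<Sum>i\<in>A. \<Sum>j\<in>B i. \<bar>w j\<bar>)"
    by (rule order_trans[OF sum_abs]) (intro sum_mono sum_abs)
  also have "\<dots> \<le> (\<Sum>i\<in>A. real (card (B i)) * M)"
    by (intro sum_mono sum_bounded_above) (use assms in auto)
  also have "\<dots> = real (\<Sum>i\<in>A. card (B i)) * M" by (simp add: sum_distrib_right)
  finally show ?thesis .
qed

context
  fixes I :: "'n::finite set" and C :: "'n \<Rightarrow> 'n set" and n m :: nat and \<nu> :: real
  assumes lat: "lattice n m I C"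
begin

lemma CuI: "u \<in> I \<Longrightarrow> u \<in> C u" and CuE: "u \<in> I \<Longrightarrow> C u - {u} \<subseteq> - I"
  and Cucard: "u \<in> I \<Longrightarrow> card (C u - {u}) = n"
  and Ux_card: "x \<in> - I \<Longrightarrow> card {u\<in>I. x \<in> C u} = m"
  using lat unfolding lattice_def by auto

lemma CuE_eq: "u \<in> I \<Longrightarrow> C u \<inter> - I = C u - {u}"
  using CuI CuE by auto

lemma avec_comp: "x \<in> - I \<Longrightarrow> avec \<nu> I C x $ r =
   (if r = x then 1 else 0) - \<nu> * (if r \<in> {u\<in>I. x \<in> C u} then 1 else 0)"
  unfolding avec_def by auto

lemma bvec_comp: "u \<in> I \<Longrightarrow> bvec \<nu> C u $ r =
   (if r = u then 1 else 0) + \<nu> * (if r \<in> C u - {u} then 1 else 0)"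
  unfolding bvec_def by auto

lemma a_inner: "x \<in> - I \<Longrightarrow> avec \<nu> I C x \<bullet> v = v $ x - \<nu> * (\<Sum>u\<in>{u\<in>I. x \<in> C u}. v $ u)"
proof -
  assume x: "x \<in> - I"
  have "avec \<nu> I C x \<bullet> v = (\<Sum>r\<in>UNIV. (if r = x then v $ r else 0) - \<nu> * (if r \<in> {u\<in>I. x \<in> C u} then v $ r else 0))"
    unfolding inner_vec_def by (intro sum.cong refl) (simp add: avec_comp[OF x] algebra_simps)
  also have "\<dots> = v $ x - \<nu> * (\<Sum>u\<in>{u\<in>I. x \<in> C u}. v $ u)"
    by (simp only: sum_subtractf sum_distrib_left[symmetric] sum_UNIV_if) simp
  finally show ?thesis .
qed

lemma b_inner: "u \<in> I \<Longrightarrow> bvec \<nu> C u \<bullet> v = v $ u + \<nu> * (\<Sum>y\<in>C u - {u}. v $ y)"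
proof -
  assume u: "u \<in> I"
  have "bvec \<nu> C u \<bullet> v = (\<Sum>r\<in>UNIV. (if r = u then v $ r else 0) + \<nu> * (if r \<in> C u - {u} then v $ r else 0))"
    unfolding inner_vec_def by (intro sum.cong refl) (simp add: bvec_comp[OF u] algebra_simps)
  also have "\<dots> = v $ u + \<nu> * (\<Sum>y\<in>C u - {u}. v $ y)"
    by (simp only: sum.distrib sum_distrib_left[symmetric] sum_UNIV_if) simp
  finally show ?thesis .
qed

lemma ab_orth: "x \<in> - I \<Longrightarrow> u \<in> I \<Longrightarrow> avec \<nu> I C x \<bullet> bvec \<nu> C u = 0"
proof -
  assume x: "x \<in> - I" and u: "u \<in> I"
  have "x \<noteq> u" using x u by auto
  have 1: "bvec \<nu> C u $ x = \<nu> * (if x \<in> C u then 1 else 0)"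
    using bvec_comp[OF u, of x] \<open>x \<noteq> u\<close> by simp
  have 2: "bvec \<nu> C u $ w = (if w = u then 1 else 0)" if "w \<in> I" for w
    using bvec_comp[OF u, of w] CuE[OF u] that by auto
  have "(\<Sum>w\<in>{w\<in>I. x \<in> C w}. bvec \<nu> C u $ w) = (\<Sum>w\<in>{w\<in>I. x \<in> C w}. if w = u then 1 else 0)"
    by (intro sum.cong refl) (simp add: 2)
  also have "\<dots> = (if x \<in> C u then 1 else 0)" using u by (simp add: sum.delta)
  finally show ?thesis using a_inner[OF x] 1 by simp
qed

abbreviation "hL \<equiv> span (avec \<nu> I C ` (- I))"
abbreviation "hU \<equiv> span (bvec \<nu> C ` I)"

lemma hL_orth: "v \<in> hL \<Longrightarrow> u \<in> I \<Longrightarrow> bvec \<nu> C u \<bullet> v = 0"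
proof -
  assume v: "v \<in> hL" and u: "u \<in> I"
  have "orthogonal (bvec \<nu> C u) v"
    by (rule orthogonal_to_span[OF v]) (use ab_orth u in \<open>auto simp: orthogonal_def inner_commute\<close>)
  thus ?thesis by (simp add: orthogonal_def)
qed

lemma hU_orth: "v \<in> hU \<Longrightarrow> x \<in> - I \<Longrightarrow> avec \<nu> I C x \<bullet> v = 0"
proof -
  assume v: "v \<in> hU" and x: "x \<in> - I"
  have "orthogonal (avec \<nu> I C x) v"
    by (rule orthogonal_to_span[OF v]) (use ab_orth x in \<open>auto simp: orthogonal_def inner_commute\<close>)
  thus ?thesis by (simp add: orthogonal_def)
qed

lemma hLU_int: "hL \<inter> hU = {0}"
proof -
  have "v = 0" if "v \<in> hL" "v \<in> hU" for v
  proof -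
    have "orthogonal v v"
      by (rule orthogonal_to_span[OF that(1)])
         (use hU_orth[OF that(2)] in \<open>auto simp: orthogonal_def inner_commute\<close>)
    thus ?thesis by (simp add: orthogonal_def)
  qed
  thus ?thesis by (auto simp: span_zero)
qed

lemma aa_comp: "x \<in> - I \<Longrightarrow> y \<in> - I \<Longrightarrow> avec \<nu> I C y $ x = (if x = y then 1 else 0)"
  by (simp add: avec_comp)

lemma bb_comp: "u \<in> I \<Longrightarrow> w \<in> I \<Longrightarrow> bvec \<nu> C w $ u = (if u = w then 1 else 0)"
  using bvec_comp[of w u] CuE[of w] by auto

lemma decomp: "\<exists>a\<in>hL. \<exists>b\<in>hU. z = a + b"
proof -
  obtain y w where y: "y \<in> hU" and w: "\<And>q. q \<in> hU \<Longrightarrow> orthogonal w q" and z: "z = y + w"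
    using orthogonal_subspace_decomp_exists[of "bvec \<nu> C ` I" z] by blast
  have bw: "bvec \<nu> C u \<bullet> w = 0" if "u \<in> I" for u
    using w[of "bvec \<nu> C u"] that span_base[of "bvec \<nu> C u" "bvec \<nu> C ` I"]
    by (auto simp: orthogonal_def inner_commute)
  have "w = (\<Sum>x\<in>- I. (w $ x) *\<^sub>R avec \<nu> I C x)"
  proof (rule vec_eq_iff[THEN iffD2], rule allI)
    fix r
    show "w $ r = (\<Sum>x\<in>- I. (w $ x) *\<^sub>R avec \<nu> I C x) $ r"
    proof (cases "r \<in> I")
      case False
      have "(\<Sum>x\<in>- I. (w $ x) *\<^sub>R avec \<nu> I C x) $ r = (\<Sum>x\<in>- I. if r = x then w $ x else 0)"
        unfolding sum_component by (intro sum.cong refl) (use False aa_comp in auto)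
      also have "\<dots> = w $ r" using False by (simp add: sum.delta)
      finally show ?thesis by simp
    next
      case True
      have "(\<Sum>x\<in>- I. (w $ x) *\<^sub>R avec \<nu> I C x) $ r = (\<Sum>x\<in>- I. if x \<in> C r then - \<nu> * w $ x else 0)"
        unfolding sum_component by (intro sum.cong refl) (use True in \<open>auto simp: avec_def\<close>)
      also have "\<dots> = - \<nu> * (\<Sum>x\<in>C r - {r}. w $ x)"
        using CuE_eq[OF True] by (simp add: sum.inter_restrict[symmetric] sum_distrib_left Int_commute)
      also have "\<dots> = w $ r" using bw[OF True] b_inner[OF True, of w] by simp
      finally show ?thesis by simp
    qed
  qed
  hence "w \<in> hL"
    by (metis (no_types, lifting) image_eqI span_base span_scale span_sum)
  thus ?thesis using y z by (metis add.commute)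
qed

lemma H_lin: "linear (H1 s t \<nu> I C)"
  by (rule linearI) (simp_all add: H1_def inner_add_right scaleR_add_left sum.distrib scaleR_sum_right algebra_simps)

lemma H_form: "H1 s t \<nu> I C v \<bullet> w = - s * (\<Sum>x\<in>- I. (avec \<nu> I C x \<bullet> v) * (avec \<nu> I C x \<bullet> w))
   + t * (\<Sum>u\<in>I. (bvec \<nu> C u \<bullet> v) * (bvec \<nu> C u \<bullet> w))"
  by (simp only: H1_def inner_add_left inner_scaleR_left inner_sum_left)

lemma H_sa: "H1 s t \<nu> I C v \<bullet> w = v \<bullet> H1 s t \<nu> I C w"
  using H_form[of s t v w] H_form[of s t w v] by (simp add: inner_commute mult.commute)

lemma H_hL: "v \<in> hL \<Longrightarrow> H1 s t \<nu> I C v = (- s) *\<^sub>R (\<Sum>x\<in>- I. (avec \<nu> I C x \<bullet> v) *\<^sub>R avec \<nu> I C x)"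
  unfolding H1_def using hL_orth by simp

lemma H_hU: "v \<in> hU \<Longrightarrow> H1 s t \<nu> I C v = t *\<^sub>R (\<Sum>u\<in>I. (bvec \<nu> C u \<bullet> v) *\<^sub>R bvec \<nu> C u)"
  unfolding H1_def using hU_orth by simp

lemma H_inv_L: "H1 s t \<nu> I C ` hL \<subseteq> hL"
proof
  fix z assume "z \<in> H1 s t \<nu> I C ` hL"
  then obtain v where v: "v \<in> hL" "z = H1 s t \<nu> I C v" by blast
  show "z \<in> hL" unfolding v(2) H_hL[OF v(1)]
    by (intro span_scale span_sum span_base) auto
qed

lemma H_inv_U: "H1 s t \<nu> I C ` hU \<subseteq> hU"
proof
  fix z assume "z \<in> H1 s t \<nu> I C ` hU"
  then obtain v where v: "v \<in> hU" "z = H1 s t \<nu> I C v" by blast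
  show "z \<in> hU" unfolding v(2) H_hU[OF v(1)]
    by (intro span_scale span_sum span_base) auto
qed

lemma H_comp_L: "v \<in> hL \<Longrightarrow> x \<in> - I \<Longrightarrow> H1 s t \<nu> I C v $ x = - s * (avec \<nu> I C x \<bullet> v)"
proof -
  assume v: "v \<in> hL" and x: "x \<in> - I"
  have "(\<Sum>y\<in>- I. (avec \<nu> I C y \<bullet> v) *\<^sub>R avec \<nu> I C y) $ x
      = (\<Sum>y\<in>- I. if x = y then avec \<nu> I C y \<bullet> v else 0)"
    unfolding sum_component by (intro sum.cong refl) (use x aa_comp in auto)
  also have "\<dots> = avec \<nu> I C x \<bullet> v" using x by (simp add: sum.delta)
  finally show ?thesis using H_hL[OF v] by simp
qed

lemma H_comp_U: "v \<in> hU \<Longrightarrow> u \<in> I \<Longrightarrow> H1 s t \<nu> I C v $ u = t * (bvec \<nu> C u \<bullet> v)"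
proof -
  assume v: "v \<in> hU" and u: "u \<in> I"
  have "(\<Sum>w\<in>I. (bvec \<nu> C w \<bullet> v) *\<^sub>R bvec \<nu> C w) $ u
      = (\<Sum>w\<in>I. if u = w then bvec \<nu> C w \<bullet> v else 0)"
    unfolding sum_component by (intro sum.cong refl) (use u bb_comp in auto)
  also have "\<dots> = bvec \<nu> C u \<bullet> v" using u by (simp add: sum.delta)
  finally show ?thesis using H_hU[OF v] by simp
qed

lemma H_quad_L: "v \<in> hL \<Longrightarrow> H1 s t \<nu> I C v \<bullet> v = - s * (\<Sum>x\<in>- I. (avec \<nu> I C x \<bullet> v)^2)"
  by (simp add: H_hL inner_sum_left power2_eq_square)

lemma H_quad_U: "v \<in> hU \<Longrightarrow> H1 s t \<nu> I C v \<bullet> v = t * (\<Sum>u\<in>I. (bvec \<nu> C u \<bullet> v)^2)"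
  by (simp add: H_hU inner_sum_left power2_eq_square)

lemma cntL: "x \<in> - I \<Longrightarrow> (\<Sum>u\<in>{u\<in>I. x \<in> C u}. card (C u - {u} - {x})) = m * (n - 1)"
proof -
  assume x: "x \<in> - I"
  have "(\<Sum>u\<in>{u\<in>I. x \<in> C u}. card (C u - {u} - {x})) = (\<Sum>u\<in>{u\<in>I. x \<in> C u}. n - 1)"
  proof (intro sum.cong refl)
    fix u assume u: "u \<in> {u\<in>I. x \<in> C u}"
    hence "x \<in> C u - {u}" using x by auto
    thus "card (C u - {u} - {x}) = n - 1" using Cucard u by (simp add: card_Diff_singleton_if)
  qed
  thus ?thesis using Ux_card[OF x] by simp
qed

lemma cntU: "u \<in> I \<Longrightarrow> (\<Sum>y\<in>C u - {u}. card ({w\<in>I. y \<in> C w} - {u})) = n * (m - 1)"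
proof -
  assume u: "u \<in> I"
  have "(\<Sum>y\<in>C u - {u}. card ({w\<in>I. y \<in> C w} - {u})) = (\<Sum>y\<in>C u - {u}. m - 1)"
  proof (intro sum.cong refl)
    fix y assume y: "y \<in> C u - {u}"
    hence "y \<in> - I" using CuE u by auto
    moreover have "u \<in> {w\<in>I. y \<in> C w}" using u y by auto
    ultimately show "card ({w\<in>I. y \<in> C w} - {u}) = m - 1" using Ux_card by (simp add: card_Diff_singleton_if)
  qed
  thus ?thesis using Cucard[OF u] by simp
qed

lemma card_filter_sum: "finite A \<Longrightarrow> card {u\<in>A. P u} = (\<Sum>u\<in>A. if P u then 1 else 0)"
  by (simp add: sum.inter_filter[symmetric])

lemma ellL_eq: "x \<in> - I \<Longrightarrow> ellL I C x = m * (n - 1)"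
proof -
  assume x: "x \<in> - I"
  have "ellL I C x = (\<Sum>y\<in>- I - {x}. \<Sum>u\<in>I. if x \<in> C u \<and> y \<in> C u then 1 else 0)"
    unfolding ellL_def ellE_def by (intro sum.cong refl) (simp add: card_filter_sum)
  also have "\<dots> = (\<Sum>u\<in>I. \<Sum>y\<in>- I - {x}. if x \<in> C u \<and> y \<in> C u then 1 else 0)"
    by (rule sum.swap)
  also have "\<dots> = (\<Sum>u\<in>I. if x \<in> C u then card (C u - {u} - {x}) else 0)"
  proof (intro sum.cong refl)
    fix u assume u: "u \<in> I"
    have "(- I - {x}) \<inter> C u = C u - {u} - {x}" using CuE_eq[OF u] by auto
    hence "(\<Sum>y\<in>- I - {x}. if y \<in> C u then 1 else 0) = card (C u - {u} - {x})"
      by (simp add: sum.inter_restrict[symmetric])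
    thus "(\<Sum>y\<in>- I - {x}. if x \<in> C u \<and> y \<in> C u then 1 else 0) = (if x \<in> C u then card (C u - {u} - {x}) else 0)"
      by simp
  qed
  also have "\<dots> = (\<Sum>u\<in>{u\<in>I. x \<in> C u}. card (C u - {u} - {x}))"
    by (simp add: sum.inter_filter)
  finally show ?thesis using cntL[OF x] by simp
qed

lemma ellU_eq: "u \<in> I \<Longrightarrow> ellU I C u = n * (m - 1)"
proof -
  assume u: "u \<in> I"
  have "ellU I C u = (\<Sum>w\<in>I - {u}. \<Sum>y\<in>C u - {u}. if y \<in> C w then 1 else 0)"
    unfolding ellU_def ellI_def
  proof (intro sum.cong refl)
    fix w assume "w \<in> I - {u}"
    have "C u \<inter> C w \<inter> - I = {y\<in>C u - {u}. y \<in> C w}" using CuE_eq[OF u] by auto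
    thus "card (C u \<inter> C w \<inter> - I) = (\<Sum>y\<in>C u - {u}. if y \<in> C w then 1 else 0)"
      using card_filter_sum[of "C u - {u}" "\<lambda>y. y \<in> C w"] by simp
  qed
  also have "\<dots> = (\<Sum>y\<in>C u - {u}. \<Sum>w\<in>I - {u}. if y \<in> C w then 1 else 0)"
    by (rule sum.swap)
  also have "\<dots> = (\<Sum>y\<in>C u - {u}. card ({w\<in>I. y \<in> C w} - {u}))"
  proof (intro sum.cong refl)
    fix y
    have "{w\<in>I. y \<in> C w} - {u} = {w\<in>I - {u}. y \<in> C w}" by auto
    thus "(\<Sum>w\<in>I - {u}. if y \<in> C w then 1 else 0) = card ({w\<in>I. y \<in> C w} - {u})"
      using card_filter_sum[of "I - {u}" "\<lambda>w. y \<in> C w"] by simp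
  qed
  finally show ?thesis using cntU[OF u] by simp
qed

lemma vL_coord: "v \<in> hL \<Longrightarrow> u \<in> I \<Longrightarrow> v $ u = - \<nu> * (\<Sum>y\<in>C u - {u}. v $ y)"
proof -
  assume "v \<in> hL" "u \<in> I"
  hence "v $ u + \<nu> * (\<Sum>y\<in>C u - {u}. v $ y) = 0" using hL_orth b_inner by metis
  thus ?thesis by linarith
qed

lemma vU_coord: "v \<in> hU \<Longrightarrow> x \<in> - I \<Longrightarrow> v $ x = \<nu> * (\<Sum>w\<in>{w\<in>I. x \<in> C w}. v $ w)"
proof -
  assume "v \<in> hU" "x \<in> - I"
  hence "v $ x - \<nu> * (\<Sum>w\<in>{w\<in>I. x \<in> C w}. v $ w) = 0" using hU_orth a_inner by metis
  thus ?thesis by linarith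
qed

lemma eigL:
  assumes v: "v \<in> hL" "v \<noteq> 0" and ev: "H1 s t \<nu> I C v = e *\<^sub>R v" and s: "s > 0"
  shows "\<bar>e - (- s) * (1 + real m * \<nu>^2)\<bar> \<le> \<bar>- s\<bar> * \<nu>^2 * real (m * (n - 1))" "e \<le> 0"
proof -
  have ex: "\<exists>y\<in>- I. v $ y \<noteq> 0"
  proof (rule ccontr)
    assume "\<not> ?thesis"
    hence z: "\<And>y. y \<in> - I \<Longrightarrow> v $ y = 0" by auto
    have "v $ r = 0 $ r" for r
    proof (cases "r \<in> I")
      case True
      have "(\<Sum>y\<in>C r - {r}. v $ y) = 0" using CuE[OF True] z by (intro sum.neutral) auto
      thus ?thesis using vL_coord[OF v(1) True] by simp
    qed (use z in auto)
    hence "v = 0" by (simp add: vec_eq_iff)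
    thus False using v by simp
  qed
  define M where "M = Max ((\<lambda>y. \<bar>v $ y\<bar>) ` (- I))"
  have fin: "finite ((\<lambda>y. \<bar>v $ y\<bar>) ` (- I))" by simp
  have ne: "(\<lambda>y. \<bar>v $ y\<bar>) ` (- I) \<noteq> {}" using ex by auto
  obtain x where x: "x \<in> - I" "\<bar>v $ x\<bar> = M"
    using Max_in[OF fin ne] unfolding M_def by auto
  have Mge: "\<bar>v $ y\<bar> \<le> M" if "y \<in> - I" for y
    unfolding M_def using fin that by (intro Max_ge) auto
  obtain y0 where y0: "y0 \<in> - I" "v $ y0 \<noteq> 0" using ex by blast
  have vx: "v $ x \<noteq> 0" using Mge[OF y0(1)] y0(2) x(2) by auto
  define U where "U = {u\<in>I. x \<in> C u}"
  define R where "R = (\<Sum>u\<in>U. \<Sum>y\<in>C u - {u} - {x}. v $ y)"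
  have "avec \<nu> I C x \<bullet> v = v $ x - \<nu> * (\<Sum>u\<in>U. - \<nu> * (\<Sum>y\<in>C u - {u}. v $ y))"
    unfolding a_inner[OF x(1)] U_def by (simp add: vL_coord[OF v(1)])
  also have "\<dots> = v $ x + \<nu>^2 * (\<Sum>u\<in>U. v $ x + (\<Sum>y\<in>C u - {u} - {x}. v $ y))"
  proof -
    have "(\<Sum>y\<in>C u - {u}. v $ y) = v $ x + (\<Sum>y\<in>C u - {u} - {x}. v $ y)" if "u \<in> U" for u
    proof -
      have "x \<in> C u - {u}" using that x(1) unfolding U_def by auto
      thus ?thesis by (simp add: sum.remove)
    qed
    hence "(\<Sum>u\<in>U. - \<nu> * (\<Sum>y\<in>C u - {u}. v $ y)) = - \<nu> * (\<Sum>u\<in>U. v $ x + (\<Sum>y\<in>C u - {u} - {x}. v $ y))"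
      by (simp add: sum_distrib_left)
    thus ?thesis by (simp add: power2_eq_square algebra_simps)
  qed
  also have "\<dots> = (1 + real m * \<nu>^2) * v $ x + \<nu>^2 * R"
    unfolding R_def using Ux_card[OF x(1)] unfolding U_def[symmetric]
    by (simp add: sum.distrib algebra_simps)
  finally have ax: "avec \<nu> I C x \<bullet> v = (1 + real m * \<nu>^2) * v $ x + \<nu>^2 * R" .
  have eq: "e * v $ x = (- s) * ((1 + real m * \<nu>^2) * v $ x + \<nu>^2 * R)"
    using H_comp_L[OF v(1) x(1), of s t] ev ax by simp
  have "\<bar>R\<bar> \<le> real (\<Sum>u\<in>U. card (C u - {u} - {x})) * M"
    unfolding R_def
  proof (rule double_sum_bound)
    fix u y assume "u \<in> U" "y \<in> C u - {u} - {x}"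
    hence "y \<in> - I" using CuE unfolding U_def by auto
    thus "\<bar>v $ y\<bar> \<le> M" by (rule Mge)
  qed auto
  hence Rb: "\<bar>R\<bar> \<le> real (m * (n - 1)) * \<bar>v $ x\<bar>" using cntL[OF x(1)] x(2) unfolding U_def by simp
  show "\<bar>e - (- s) * (1 + real m * \<nu>^2)\<bar> \<le> \<bar>- s\<bar> * \<nu>^2 * real (m * (n - 1))"
    by (rule gersh[OF eq Rb vx]) simp
  have "e * (v \<bullet> v) = H1 s t \<nu> I C v \<bullet> v" using ev by simp
  also have "\<dots> \<le> 0" using H_quad_L[OF v(1), of s t] s
    by (simp add: mult_nonneg_nonneg sum_nonneg mult_le_0_iff)
  finally have "e * (v \<bullet> v) \<le> 0" .
  moreover have "v \<bullet> v > 0" using v(2) by simp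
  ultimately show "e \<le> 0" using mult_le_0_iff[of e "v \<bullet> v"] by linarith
qed

lemma eigU:
  assumes v: "v \<in> hU" "v \<noteq> 0" and ev: "H1 s t \<nu> I C v = e *\<^sub>R v" and t: "t > 0"
  shows "\<bar>e - t * (1 + real n * \<nu>^2)\<bar> \<le> \<bar>t\<bar> * \<nu>^2 * real (n * (m - 1))" "e \<ge> 0"
proof -
  have ex: "\<exists>y\<in>I. v $ y \<noteq> 0"
  proof (rule ccontr)
    assume "\<not> ?thesis"
    hence z: "\<And>y. y \<in> I \<Longrightarrow> v $ y = 0" by auto
    have "v $ r = 0 $ r" for r
    proof (cases "r \<in> I")
      case False
      hence r: "r \<in> - I" by simp
      have "(\<Sum>w\<in>{w\<in>I. r \<in> C w}. v $ w) = 0" using z by (intro sum.neutral) auto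
      thus ?thesis using vU_coord[OF v(1) r] by simp
    qed (use z in auto)
    hence "v = 0" by (simp add: vec_eq_iff)
    thus False using v by simp
  qed
  define M where "M = Max ((\<lambda>y. \<bar>v $ y\<bar>) ` I)"
  have fin: "finite ((\<lambda>y. \<bar>v $ y\<bar>) ` I)" by simp
  have ne: "(\<lambda>y. \<bar>v $ y\<bar>) ` I \<noteq> {}" using ex by auto
  obtain u where u: "u \<in> I" "\<bar>v $ u\<bar> = M"
    using Max_in[OF fin ne] unfolding M_def by auto
  have Mge: "\<bar>v $ y\<bar> \<le> M" if "y \<in> I" for y
    unfolding M_def using fin that by (intro Max_ge) auto
  obtain y0 where y0: "y0 \<in> I" "v $ y0 \<noteq> 0" using ex by blast
  have vu: "v $ u \<noteq> 0" using Mge[OF y0(1)] y0(2) u(2) by auto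
  define R where "R = (\<Sum>y\<in>C u - {u}. \<Sum>w\<in>{w\<in>I. y \<in> C w} - {u}. v $ w)"
  have yE: "y \<in> - I" if "y \<in> C u - {u}" for y using CuE[OF u(1)] that by auto
  have "bvec \<nu> C u \<bullet> v = v $ u + \<nu> * (\<Sum>y\<in>C u - {u}. \<nu> * (\<Sum>w\<in>{w\<in>I. y \<in> C w}. v $ w))"
    unfolding b_inner[OF u(1)] by (simp add: vU_coord[OF v(1) yE])
  also have "\<dots> = v $ u + \<nu>^2 * (\<Sum>y\<in>C u - {u}. v $ u + (\<Sum>w\<in>{w\<in>I. y \<in> C w} - {u}. v $ w))"
  proof -
    have "(\<Sum>w\<in>{w\<in>I. y \<in> C w}. v $ w) = v $ u + (\<Sum>w\<in>{w\<in>I. y \<in> C w} - {u}. v $ w)" if "y \<in> C u - {u}" for y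
    proof -
      have "u \<in> {w\<in>I. y \<in> C w}" using that u(1) by auto
      thus ?thesis by (simp add: sum.remove)
    qed
    hence "(\<Sum>y\<in>C u - {u}. \<nu> * (\<Sum>w\<in>{w\<in>I. y \<in> C w}. v $ w)) = \<nu> * (\<Sum>y\<in>C u - {u}. v $ u + (\<Sum>w\<in>{w\<in>I. y \<in> C w} - {u}. v $ w))"
      by (simp add: sum_distrib_left)
    thus ?thesis by (simp add: power2_eq_square algebra_simps)
  qed
  also have "\<dots> = (1 + real n * \<nu>^2) * v $ u + \<nu>^2 * R"
    unfolding R_def using Cucard[OF u(1)]
    by (simp add: sum.distrib algebra_simps)
  finally have bu: "bvec \<nu> C u \<bullet> v = (1 + real n * \<nu>^2) * v $ u + \<nu>^2 * R" .
  have eq: "e * v $ u = t * ((1 + real n * \<nu>^2) * v $ u + \<nu>^2 * R)"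
    using H_comp_U[OF v(1) u(1), of s t] ev bu by simp
  have "\<bar>R\<bar> \<le> real (\<Sum>y\<in>C u - {u}. card ({w\<in>I. y \<in> C w} - {u})) * M"
    unfolding R_def
  proof (rule double_sum_bound)
    fix y w assume "y \<in> C u - {u}" "w \<in> {w\<in>I. y \<in> C w} - {u}"
    hence "w \<in> I" by auto
    thus "\<bar>v $ w\<bar> \<le> M" by (rule Mge)
  qed auto
  hence Rb: "\<bar>R\<bar> \<le> real (n * (m - 1)) * \<bar>v $ u\<bar>" using cntU[OF u(1)] u(2) by simp
  show "\<bar>e - t * (1 + real n * \<nu>^2)\<bar> \<le> \<bar>t\<bar> * \<nu>^2 * real (n * (m - 1))"
    by (rule gersh[OF eq Rb vu]) simp
  have "e * (v \<bullet> v) = H1 s t \<nu> I C v \<bullet> v" using ev by simp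
  also have "\<dots> \<ge> 0" using H_quad_U[OF v(1), of s t] t
    by (simp add: sum_nonneg)
  finally have "e * (v \<bullet> v) \<ge> 0" .
  moreover have "v \<bullet> v > 0" using v(2) by simp
  ultimately show "e \<ge> 0" using zero_le_mult_iff[of e "v \<bullet> v"] by linarith
qed

end

theorem proposition1:
  fixes I :: "'n::finite set" and C :: "'n \<Rightarrow> 'n set"
    and n m :: nat and s t U \<nu> :: real
  assumes "n \<ge> 2" and "m \<ge> 2" and "lattice n m I C"
    and "s > 0" and "t > 0" and "U > 0" and "\<nu> > 0"
  shows "let hL = span (avec \<nu> I C ` (- I)); hU = span (bvec \<nu> C ` I); H = H1 s t \<nu> I C in
     (\<forall>v. \<exists>a\<in>hL. \<exists>b\<in>hU. v = a + b) \<and> hL \<inter> hU = {0} \<and>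
     H ` hL \<subseteq> hL \<and> H ` hU \<subseteq> hU \<and>
     (\<exists>B. B \<subseteq> hL \<and> independent B \<and> span B = hL \<and> (\<forall>b\<in>B. \<exists>e. H b = e *\<^sub>R b)) \<and>
     (\<exists>B. B \<subseteq> hU \<and> independent B \<and> span B = hU \<and> (\<forall>b\<in>B. \<exists>e. H b = e *\<^sub>R b)) \<and>
     (\<forall>e v. v \<in> hL \<and> v \<noteq> 0 \<and> H v = e *\<^sub>R v \<longrightarrow>
        (\<forall>x\<in>- I. - s * (1 + (real m + real (ellL I C x)) * \<nu>\<^sup>2) \<le> e \<and>
                  e \<le> min 0 (- s * (1 + (real m - real (ellL I C x)) * \<nu>\<^sup>2)))) \<and>
     (\<forall>e v. v \<in> hU \<and> v \<noteq> 0 \<and> H v = e *\<^sub>R v \<longrightarrow>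
        (\<forall>u\<in>I. max 0 (t * (1 + (real n - real (ellU I C u)) * \<nu>\<^sup>2)) \<le> e \<and>
                 e \<le> t * (1 + (real n + real (ellU I C u)) * \<nu>\<^sup>2)))"
proof -
  note lat = assms(3)
  have L: "- s * (1 + (real m + real (ellL I C x)) * \<nu>\<^sup>2) \<le> e \<and>
                  e \<le> min 0 (- s * (1 + (real m - real (ellL I C x)) * \<nu>\<^sup>2))"
    if v: "v \<in> span (avec \<nu> I C ` (- I))" "v \<noteq> 0" "H1 s t \<nu> I C v = e *\<^sub>R v" and x: "x \<in> - I" for e v x
  proof -
    define K where "K = real (m * (n - 1))"
    have b1: "\<bar>e - (- s) * (1 + real m * \<nu>^2)\<bar> \<le> \<bar>- s\<bar> * \<nu>^2 * K"
      unfolding K_def by (rule eigL[OF lat v assms(4)])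
    have b2: "e \<le> 0" by (rule eigL[OF lat v assms(4)])
    have ell: "real (ellL I C x) = K" unfolding K_def using ellL_eq[OF lat x] by simp
    have e1: "- s * (1 + (real m + K) * \<nu>\<^sup>2) = (- s) * (1 + real m * \<nu>^2) - \<bar>- s\<bar> * \<nu>^2 * K"
      using assms(4) by (simp add: algebra_simps)
    have e2: "- s * (1 + (real m - K) * \<nu>\<^sup>2) = (- s) * (1 + real m * \<nu>^2) + \<bar>- s\<bar> * \<nu>^2 * K"
      using assms(4) by (simp add: algebra_simps)
    show ?thesis unfolding ell e1 e2 using b1 b2 by (simp add: abs_le_iff)
  qed
  have Uu: "max 0 (t * (1 + (real n - real (ellU I C u)) * \<nu>\<^sup>2)) \<le> e \<and>
                 e \<le> t * (1 + (real n + real (ellU I C u)) * \<nu>\<^sup>2)"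
    if v: "v \<in> span (bvec \<nu> C ` I)" "v \<noteq> 0" "H1 s t \<nu> I C v = e *\<^sub>R v" and u: "u \<in> I" for e v u
  proof -
    define K where "K = real (n * (m - 1))"
    have b1: "\<bar>e - t * (1 + real n * \<nu>^2)\<bar> \<le> \<bar>t\<bar> * \<nu>^2 * K"
      unfolding K_def by (rule eigU[OF lat v assms(5)])
    have b2: "e \<ge> 0" by (rule eigU[OF lat v assms(5)])
    have ell: "real (ellU I C u) = K" unfolding K_def using ellU_eq[OF lat u] by simp
    have e1: "t * (1 + (real n - K) * \<nu>\<^sup>2) = t * (1 + real n * \<nu>^2) - \<bar>t\<bar> * \<nu>^2 * K"
      using assms(5) by (simp add: algebra_simps)
    have e2: "t * (1 + (real n + K) * \<nu>\<^sup>2) = t * (1 + real n * \<nu>^2) + \<bar>t\<bar> * \<nu>^2 * K"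
      using assms(5) by (simp add: algebra_simps)
    show ?thesis unfolding ell e1 e2 using b1 b2 by (simp add: abs_le_iff)
  qed
  have BL: "\<exists>B. B \<subseteq> span (avec \<nu> I C ` (- I)) \<and> independent B \<and> span B = span (avec \<nu> I C ` (- I)) \<and> (\<forall>b\<in>B. \<exists>e. H1 s t \<nu> I C b = e *\<^sub>R b)"
    by (rule eigen_basis[OF H_lin[OF lat] H_sa[OF lat] subspace_span H_inv_L[OF lat]])
  have BU: "\<exists>B. B \<subseteq> span (bvec \<nu> C ` I) \<and> independent B \<and> span B = span (bvec \<nu> C ` I) \<and> (\<forall>b\<in>B. \<exists>e. H1 s t \<nu> I C b = e *\<^sub>R b)"
    by (rule eigen_basis[OF H_lin[OF lat] H_sa[OF lat] subspace_span H_inv_U[OF lat]])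
  have G7: "\<forall>e v. v \<in> span (avec \<nu> I C ` (- I)) \<and> v \<noteq> 0 \<and> H1 s t \<nu> I C v = e *\<^sub>R v \<longrightarrow>
        (\<forall>x\<in>- I. - s * (1 + (real m + real (ellL I C x)) * \<nu>\<^sup>2) \<le> e \<and>
                  e \<le> min 0 (- s * (1 + (real m - real (ellL I C x)) * \<nu>\<^sup>2)))"
    using L by blast
  have G8: "\<forall>e v. v \<in> span (bvec \<nu> C ` I) \<and> v \<noteq> 0 \<and> H1 s t \<nu> I C v = e *\<^sub>R v \<longrightarrow>
        (\<forall>u\<in>I. max 0 (t * (1 + (real n - real (ellU I C u)) * \<nu>\<^sup>2)) \<le> e \<and>
                 e \<le> t * (1 + (real n + real (ellU I C u)) * \<nu>\<^sup>2))"
    using Uu by blast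
  show ?thesis unfolding Let_def
  proof (intro conjI)
    show "\<forall>v. \<exists>a\<in>span (avec \<nu> I C ` (- I)). \<exists>b\<in>span (bvec \<nu> C ` I). v = a + b"
      using decomp[OF lat] by blast
  next
    show "span (avec \<nu> I C ` (- I)) \<inter> span (bvec \<nu> C ` I) = {0}" by (rule hLU_int[OF lat])
  next
    show "H1 s t \<nu> I C ` span (avec \<nu> I C ` (- I)) \<subseteq> span (avec \<nu> I C ` (- I))" by (rule H_inv_L[OF lat])
  next
    show "H1 s t \<nu> I C ` span (bvec \<nu> C ` I) \<subseteq> span (bvec \<nu> C ` I)" by (rule H_inv_U[OF lat])
  next
    show "\<exists>B\<subseteq>span (avec \<nu> I C ` (- I)). independent B \<and> span B = span (avec \<nu> I C ` (- I)) \<and> (\<forall>b\<in>B. \<exists>e. H1 s t \<nu> I C b = e *\<^sub>R b)"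
      using BL by blast
  next
    show "\<exists>B\<subseteq>span (bvec \<nu> C ` I). independent B \<and> span B = span (bvec \<nu> C ` I) \<and> (\<forall>b\<in>B. \<exists>e. H1 s t \<nu> I C b = e *\<^sub>R b)"
      using BU by blast
  qed (rule G7, rule G8)
qed

end
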